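(* Let $(\nu_d,\nu^\Box_d)_{d\in\mathbb N}$ be a sequence of pairs of Borel probability measures on $\mathbb R$ such that each $\nu_d$ has finite moments of all orders, each $\nu^\Box_d$ is compactly supported, $\lim_{d\to\infty}|m_k(\nu_d)-m_k(\nu^\Box_d)|=0$ for every $k\in\mathbb N$, and there is $M'>0$ with $\operatorname{supp}\nu^\Box_d\subset[-M',M']$ for all $d$. Then for every $\gamma>0$ and $M>0$, \[\lim_{d\to\infty}\sup_{\mu\in\mathcal B_M}\big|H_\gamma(\nu_d,\mu)-H_\gamma(\nu^\Box_d,\mu)\big|=0.\]
   Context: $m_k(\mu)=\int x^k\mu(dx)$. $\mathcal B_M$ is the set of Borel probability measures on $\mathbb R$ with support in $[-M,M]$. $P_\gamma(x)=\frac{\gamma}{\pi(x^2+\gamma^2)}$, $(P_\gamma*\nu)(x)=\int P_\gamma(x-t)\nu(dt)$, $G_\mu(z)=\int\frac{\mu(dt)}{z-t}$. For compactly supported $\mu$ and $\nu$ with finite second moment, $H_\gamma(\nu,\mu)=\int\ell_\gamma(x,\mu)(P_\gamma*\nu)(x)dx$ with $\ell_\gamma(x,\mu)=-\log[-\frac1\pi\operatorname{Im}G_\mu(x+i\gamma)]$. *)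

theory Defs
  imports "HOL-Probability.Probability"
begin

definition moment :: "nat \<Rightarrow> real measure \<Rightarrow> real" where
  "moment k \<mu> = (\<integral>x. x ^ k \<partial>\<mu>)"

definition borel_prob :: "real measure \<Rightarrow> bool" where
  "borel_prob \<mu> \<longleftrightarrow> prob_space \<mu> \<and> sets \<mu> = sets borel"

definition supp_within :: "real measure \<Rightarrow> real \<Rightarrow> bool" where
  "supp_within \<mu> M \<longleftrightarrow> (AE x in \<mu>. x \<in> {-M..M})"

definition B :: "real \<Rightarrow> real measure set" where
  "B M = {\<mu>. borel_prob \<mu> \<and> supp_within \<mu> M}"

definition compactly_supported :: "real measure \<Rightarrow> bool" where
  "compactly_supported \<mu> \<longleftrightarrow> (\<exists>K. supp_within \<mu> K)"

definition Poisson :: "real \<Rightarrow> real \<Rightarrow> real" where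
  "Poisson \<gamma> x = \<gamma> / (pi * (x\<^sup>2 + \<gamma>\<^sup>2))"

definition Poisson_conv :: "real \<Rightarrow> real measure \<Rightarrow> real \<Rightarrow> real" where
  "Poisson_conv \<gamma> \<nu> x = (\<integral>t. Poisson \<gamma> (x - t) \<partial>\<nu>)"

definition Stieltjes :: "real measure \<Rightarrow> complex \<Rightarrow> complex" where
  "Stieltjes \<mu> z = (\<integral>t. 1 / (z - complex_of_real t) \<partial>\<mu>)"

definition ell :: "real \<Rightarrow> real \<Rightarrow> real measure \<Rightarrow> real" where
  "ell \<gamma> x \<mu> = - ln (- (1 / pi) * Im (Stieltjes \<mu> (Complex x \<gamma>)))"

definition H :: "real \<Rightarrow> real measure \<Rightarrow> real measure \<Rightarrow> real" where
  "H \<gamma> \<nu> \<mu> = (\<integral>x. ell \<gamma> x \<mu> * Poisson_conv \<gamma> \<nu> x \<partial>lborel)"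

end

theory Submission
  imports Defs
begin


lemma sqpos: "(\<gamma>::real) > 0 \<Longrightarrow> 0 < y\<^sup>2 + \<gamma>\<^sup>2"
proof -
  assume "\<gamma> > 0"
  then have "0 < \<gamma>\<^sup>2" by simp
  moreover have "0 \<le> y\<^sup>2" by simp
  ultimately show "0 < y\<^sup>2 + \<gamma>\<^sup>2" by linarith
qed

lemma Poisson_pos: assumes "\<gamma> > 0" shows "0 < Poisson \<gamma> y"
proof -
  have "0 < \<gamma>\<^sup>2" using assms by simp
  moreover have "0 \<le> y\<^sup>2" by simp
  ultimately have "0 < y\<^sup>2 + \<gamma>\<^sup>2" by linarith
  then show ?thesis unfolding Poisson_def
    by (rule divide_pos_pos[OF assms mult_pos_pos[OF pi_gt_zero]])
qed

lemma Poisson_le: assumes "\<gamma> > 0" shows "Poisson \<gamma> y \<le> 1/(pi*\<gamma>)"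
proof -
  have "pi*\<gamma>^2 \<le> pi * (y\<^sup>2 + \<gamma>\<^sup>2)" by (simp add: pi_gt_zero)
  hence "\<gamma> / (pi * (y\<^sup>2 + \<gamma>\<^sup>2)) \<le> \<gamma> / (pi*\<gamma>^2)"
    using assms sqpos[OF assms] by (intro divide_left_mono) (auto intro!: mult_pos_pos)
  also have "\<dots> = 1/(pi*\<gamma>)" using assms by (simp add: power2_eq_square)
  finally show ?thesis unfolding Poisson_def .
qed

lemma Poisson_tail: assumes "\<gamma> > 0"
  shows "(1+x\<^sup>2) * Poisson \<gamma> (x-t) \<le> (2/(pi*\<gamma>) + 2*\<gamma>/pi) * (1+t\<^sup>2)"
proof -
  define u where "u = (x-t)\<^sup>2"
  define D where "D = u + \<gamma>\<^sup>2"
  have u0: "u \<ge> 0" unfolding u_def by simp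
  have "0 \<le> (x - 2*t)\<^sup>2" by simp
  then have x2: "1 + x\<^sup>2 \<le> 1 + 2*u + 2*t\<^sup>2" unfolding u_def
    by (simp add: power2_eq_square algebra_simps)
  have g2: "0 < \<gamma>\<^sup>2" using assms by simp
  then have d: "D > 0" using u0 unfolding D_def by linarith
  have uD: "u \<le> D" and gD: "\<gamma>\<^sup>2 \<le> D" using u0 g2 unfolding D_def by linarith+
  have pn: "pi \<noteq> 0" by simp
  have "(1+x\<^sup>2) * Poisson \<gamma> (x-t) = \<gamma> * (1+x\<^sup>2) / (pi*D)"
    unfolding Poisson_def u_def D_def by simp
  also have "\<dots> \<le> \<gamma> * (1 + 2*u + 2*t\<^sup>2) / (pi*D)"
    using x2 assms d by (intro divide_right_mono mult_left_mono) auto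
  also have "\<dots> = (\<gamma>/pi) * ((1 + 2*t\<^sup>2)/D + 2*(u/D))"
    using d pn by (simp add: field_simps)
  also have "\<dots> \<le> (\<gamma>/pi) * ((1 + 2*t\<^sup>2)/\<gamma>\<^sup>2 + 2*1)"
  proof -
    have "(1 + 2*t\<^sup>2)/D \<le> (1 + 2*t\<^sup>2)/\<gamma>\<^sup>2"
      using gD g2 d by (intro divide_left_mono) (auto intro: mult_pos_pos)
    moreover have "u/D \<le> 1" using d uD by simp
    ultimately show ?thesis using assms by (intro mult_left_mono) auto
  qed
  also have "\<dots> = (1 + 2*t\<^sup>2)/(pi*\<gamma>) + 2*\<gamma>/pi"
    using assms pn by (simp add: field_simps power2_eq_square)
  also have "\<dots> \<le> (2/(pi*\<gamma>) + 2*\<gamma>/pi) * (1+t\<^sup>2)"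
  proof -
    have "(1 + 2*t\<^sup>2)/(pi*\<gamma>) \<le> (2/(pi*\<gamma>)) * (1+t\<^sup>2)"
      using assms by (simp add: field_simps)
    moreover have "2*\<gamma>/pi \<le> 2*\<gamma>/pi * (1+t\<^sup>2)"
      using assms mult_left_mono[of 1 "1+t\<^sup>2" "2*\<gamma>/pi"] by simp
    ultimately show ?thesis by (simp add: distrib_right)
  qed
  finally show ?thesis .
qed

lemma Poisson_lower: assumes "\<gamma> > 0" "\<bar>t\<bar> \<le> M"
  shows "\<gamma> / (pi*((\<bar>x\<bar>+M)\<^sup>2+\<gamma>\<^sup>2)) \<le> Poisson \<gamma> (x-t)"
proof -
  have "(x-t)\<^sup>2 \<le> (\<bar>x\<bar>+M)\<^sup>2"
    using assms by (intro power2_le_iff_abs_le[THEN iffD2]) auto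
  then show ?thesis unfolding Poisson_def using assms
    by (intro divide_left_mono mult_left_mono) (auto intro!: mult_pos_pos add_nonneg_pos)
qed

lemma Poisson_conv_measurable:
  assumes "borel_prob \<nu>"
  shows "Poisson_conv \<gamma> \<nu> \<in> borel_measurable lborel"
proof -
  interpret prob_space \<nu> using assms unfolding borel_prob_def by simp
  have s: "sets \<nu> = sets borel" using assms unfolding borel_prob_def by simp
  have "(\<lambda>(x,t). Poisson \<gamma> (x - t)) \<in> borel_measurable (borel \<Otimes>\<^sub>M borel)"
    unfolding Poisson_def by measurable
  moreover have "sets (lborel \<Otimes>\<^sub>M \<nu>) = sets (borel \<Otimes>\<^sub>M borel)"
    using s by (intro sets_pair_measure_cong) auto
  ultimately have "(\<lambda>(x,t). Poisson \<gamma> (x - t)) \<in> borel_measurable (lborel \<Otimes>\<^sub>M \<nu>)"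
    using measurable_cong_sets by blast
  then show ?thesis unfolding Poisson_conv_def
    by (rule borel_measurable_lebesgue_integral)
qed

lemma Poisson_integrable:
  assumes "borel_prob \<nu>" "\<gamma> > 0"
  shows "integrable \<nu> (\<lambda>t. Poisson \<gamma> (x - t))"
proof -
  interpret prob_space \<nu> using assms unfolding borel_prob_def by simp
  have s: "sets \<nu> = sets borel" using assms unfolding borel_prob_def by simp
  have "(\<lambda>t. Poisson \<gamma> (x - t)) \<in> borel_measurable borel"
    unfolding Poisson_def by measurable
  then have m: "(\<lambda>t. Poisson \<gamma> (x - t)) \<in> borel_measurable \<nu>"
    using measurable_cong_sets[OF s refl] by blast
  show ?thesis
    by (rule integrable_const_bound[where B="1/(pi*\<gamma>)"])
       (use Poisson_le[OF assms(2)] Poisson_pos[OF assms(2)] m in \<open>auto simp: less_imp_le\<close>)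
qed

lemma Stieltjes_Poisson:
  assumes "borel_prob \<mu>" "\<gamma> > 0"
  shows "- (1/pi) * Im (Stieltjes \<mu> (Complex x \<gamma>)) = Poisson_conv \<gamma> \<mu> x"
proof -
  interpret prob_space \<mu> using assms unfolding borel_prob_def by simp
  have s: "sets \<mu> = sets borel" using assms unfolding borel_prob_def by simp
  have "(\<lambda>t. 1 / (Complex x \<gamma> - complex_of_real t)) \<in> borel_measurable borel"
    by measurable
  then have m: "(\<lambda>t. 1 / (Complex x \<gamma> - complex_of_real t)) \<in> borel_measurable \<mu>"
    using measurable_cong_sets[OF s refl] by blast
  have nz: "Complex x \<gamma> - complex_of_real t \<noteq> 0" for t
    using assms by (simp add: complex_eq_iff)
  have nb: "norm (1 / (Complex x \<gamma> - complex_of_real t)) \<le> 1/\<gamma>" for t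
  proof -
    have "\<gamma> \<le> norm (Complex x \<gamma> - complex_of_real t)"
      using abs_Im_le_cmod[of "Complex x \<gamma> - complex_of_real t"] assms by simp
    then have "1 / norm (Complex x \<gamma> - complex_of_real t) \<le> 1/\<gamma>"
      using assms by (intro divide_left_mono) (auto intro!: mult_pos_pos)
    then show ?thesis by (simp add: norm_divide)
  qed
  have int: "integrable \<mu> (\<lambda>t. 1 / (Complex x \<gamma> - complex_of_real t))"
    by (rule integrable_const_bound[where B="1/\<gamma>"]) (use nb m in auto)
  have im: "Im (1 / (Complex x \<gamma> - complex_of_real t)) = - pi * Poisson \<gamma> (x - t)" for t
    unfolding Poisson_def by (simp add: Im_divide complex_eq_iff power2_eq_square)
  have "Im (Stieltjes \<mu> (Complex x \<gamma>)) = (\<integral>t. Im (1 / (Complex x \<gamma> - complex_of_real t)) \<partial>\<mu>)"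
    unfolding Stieltjes_def using int by simp
  also have "\<dots> = (\<integral>t. - pi * Poisson \<gamma> (x - t) \<partial>\<mu>)" by (simp only: im)
  also have "\<dots> = - pi * Poisson_conv \<gamma> \<mu> x" unfolding Poisson_conv_def by simp
  finally show ?thesis by simp
qed



definition ee :: "real \<Rightarrow> real \<Rightarrow> real" where
  "ee c y = (c + 2 * ln (1 + y)) / (1 + y)\<^sup>2"

lemma ee_integrable_half:
  assumes "c \<ge> 0"
  shows "integrable lborel (\<lambda>y. ee c y * indicator {0..} y)"
proof -
  define F where "F y = - (c + 2 + 2 * ln (1 + y)) / (1 + y)" for y
  have meas: "ee c \<in> borel_measurable borel" unfolding ee_def by measurable
  have der: "DERIV F y :> ee c y" if "0 \<le> y" for y
  proof -
    have p: "1 + y > 0" using that by simp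
    have "DERIV F y :> - ((2 * (1/(1+y))) * (1+y) - (c + 2 + 2 * ln (1 + y)) * 1) / (1+y)\<^sup>2"
      unfolding F_def using p
      by (auto intro!: derivative_eq_intros simp: power2_eq_square)
    moreover have "- ((2 * (1/(1+y))) * (1+y) - (c + 2 + 2 * ln (1 + y)) * 1) / (1+y)\<^sup>2 = ee c y"
    proof -
      have "(2 * (1/(1+y))) * (1+y) = 2" using p by (simp add: field_simps)
      then show ?thesis unfolding ee_def by (simp add: algebra_simps)
    qed
    ultimately show ?thesis by simp
  qed
  have nn: "0 \<le> ee c y" if "0 \<le> y" for y
    unfolding ee_def using that assms by (intro divide_nonneg_pos) auto
  have lim: "(F \<longlongrightarrow> 0) at_top"
  proof -
    have f1: "filterlim (\<lambda>y::real. 1 + y) at_top at_top"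
      by (rule filterlim_tendsto_add_at_top[OF tendsto_const filterlim_ident])
    have t1: "((\<lambda>y::real. ln (1+y) / (1+y)) \<longlongrightarrow> 0) at_top"
      using filterlim_compose[OF ln_x_over_x_tendsto_0 f1] by blast
    have t2: "((\<lambda>y::real. 1 / (1+y)) \<longlongrightarrow> 0) at_top"
      by (rule tendsto_divide_0[OF tendsto_const]) (rule filterlim_at_top_imp_at_infinity[OF f1])
    have "((\<lambda>y. - (c+2) * (1 / (1+y)) - 2 * (ln (1+y) / (1+y))) \<longlongrightarrow> - (c+2) * 0 - 2 * 0) at_top"
      by (intro tendsto_intros t1 t2)
    moreover have "F = (\<lambda>y. - (c+2) * (1 / (1+y)) - 2 * (ln (1+y) / (1+y)))"
    proof (rule ext)
      fix y
      have "F y = (-(c+2) - 2*ln(1+y))/(1+y)" unfolding F_def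
        by (simp add: minus_divide_left[symmetric] algebra_simps)
      also have "\<dots> = -(c+2)/(1+y) - (2*ln(1+y))/(1+y)" by (rule diff_divide_distrib)
      finally show "F y = - (c+2) * (1 / (1+y)) - 2 * (ln (1+y) / (1+y))" by simp
    qed
    ultimately show ?thesis by simp
  qed
  have "(\<integral>\<^sup>+x. ennreal (ee c x) * indicator {0 ..} x \<partial>lborel) = ennreal (0 - F 0)"
    by (rule nn_integral_FTC_atLeast[OF meas der nn lim])
  moreover have "(\<lambda>x. ennreal (ee c x * indicator {0..} x)) = (\<lambda>x. ennreal (ee c x) * indicator {0..} x)"
    by (auto simp: indicator_def)
  ultimately have fin: "(\<integral>\<^sup>+x. ennreal (ee c x * indicator {0 ..} x) \<partial>lborel) < \<infinity>"
    by simp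
  show ?thesis
    by (rule integrableI_nonneg) (use fin meas nn in \<open>auto simp: indicator_def\<close>)
qed

lemma ee_integrable:
  assumes "c \<ge> 0"
  shows "integrable lborel (\<lambda>x. ee c \<bar>x\<bar>)"
proof -
  have i1: "integrable lborel (\<lambda>y. ee c y * indicator {0..} y)" by (rule ee_integrable_half[OF assms])
  have "integrable lborel (\<lambda>x. ee c (0 + -1 * x) * indicator {0..} (0 + -1 * x))"
    using lborel_integrable_real_affine_iff[of "-1" "\<lambda>y. ee c y * indicator {0..} y" 0] i1 by simp
  then have i2: "integrable lborel (\<lambda>x. ee c (-x) * indicator {0..} (-x))" by simp
  have nn: "0 \<le> ee c y" if "0 \<le> y" for y
    unfolding ee_def using that assms by (intro divide_nonneg_pos) auto
  show ?thesis
  proof (rule Bochner_Integration.integrable_bound[OF Bochner_Integration.integrable_add[OF i1 i2]])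
    show "(\<lambda>x. ee c \<bar>x\<bar>) \<in> borel_measurable lborel" unfolding ee_def by measurable
    show "AE x in lborel. norm (ee c \<bar>x\<bar>) \<le> norm (ee c x * indicator {0..} x + ee c (-x) * indicator {0..} (-x))"
      using nn by (auto simp: indicator_def abs_if)
  qed
qed



lemma bp_meas: "borel_prob \<mu> \<Longrightarrow> f \<in> borel_measurable borel \<Longrightarrow> f \<in> borel_measurable \<mu>"
  unfolding borel_prob_def using measurable_cong_sets by blast

lemma bp_int_bounded:
  fixes f :: "real \<Rightarrow> real"
  assumes "borel_prob \<mu>" "f \<in> borel_measurable borel" "\<And>x. \<bar>f x\<bar> \<le> Bd"
  shows "integrable \<mu> f"
proof -
  interpret prob_space \<mu> using assms unfolding borel_prob_def by simp
  show ?thesis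
    by (rule integrable_const_bound[where B=Bd]) (use assms bp_meas in auto)
qed

lemma supp_int_pow:
  assumes "borel_prob \<mu>" "supp_within \<mu> M"
  shows "integrable \<mu> (\<lambda>x. x^k)"
proof -
  interpret prob_space \<mu> using assms unfolding borel_prob_def by simp
  have "AE x in \<mu>. norm (x^k) \<le> M^k"
    using assms(2) unfolding supp_within_def
  proof (rule AE_mp, intro AE_I2 impI)
    fix x :: real assume "x \<in> {-M..M}"
    then have "\<bar>x\<bar> \<le> M" by auto
    then have "\<bar>x\<bar>^k \<le> M^k" by (intro power_mono) auto
    then show "norm (x^k) \<le> M^k" by (simp add: power_abs)
  qed
  moreover have "(\<lambda>x::real. x^k) \<in> borel_measurable \<mu>" by (rule bp_meas[OF assms(1)]) measurable
  ultimately show ?thesis by (rule integrable_const_bound)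
qed

lemma supp_mom_le:
  assumes "borel_prob \<mu>" "supp_within \<mu> M"
  shows "moment (2*j) \<mu> \<le> M^(2*j)"
proof -
  interpret prob_space \<mu> using assms unfolding borel_prob_def by simp
  have "AE x in \<mu>. x^(2*j) \<le> M^(2*j)"
    using assms(2) unfolding supp_within_def
  proof (rule AE_mp, intro AE_I2 impI)
    fix x :: real assume "x \<in> {-M..M}"
    then have "\<bar>x\<bar> \<le> M" by auto
    then have "\<bar>x\<bar>^(2*j) \<le> M^(2*j)" by (simp add: power_mono)
    moreover have "\<bar>x\<bar>^(2*j) = x^(2*j)" by (simp add: power_mult power_even_abs)
    ultimately show "x^(2*j) \<le> M^(2*j)" by simp
  qed
  then have "(\<integral>x. x^(2*j) \<partial>\<mu>) \<le> (\<integral>x. M^(2*j) \<partial>\<mu>)"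
    by (intro integral_mono_AE supp_int_pow[OF assms]) auto
  then show ?thesis unfolding moment_def by (simp add: prob_space)
qed

lemma moment_weak:
  fixes \<nu> \<nu>b :: "nat \<Rightarrow> real measure" and M' Hb :: real and h :: "real \<Rightarrow> real"
  assumes bp: "\<And>d. borel_prob (\<nu> d)" and bpb: "\<And>d. borel_prob (\<nu>b d)"
    and int: "\<And>d k. integrable (\<nu> d) (\<lambda>x. x ^ k)"
    and mom: "\<And>k. (\<lambda>d. moment k (\<nu> d) - moment k (\<nu>b d)) \<longlonglongrightarrow> 0"
    and M'pos: "M' > 0" and supp: "\<And>d. supp_within (\<nu>b d) M'"
    and hc: "continuous_on UNIV h" and hb: "\<And>t. \<bar>h t\<bar> \<le> Hb"
  shows "(\<lambda>d. (\<integral>t. h t \<partial>\<nu> d) - (\<integral>t. h t \<partial>\<nu>b d)) \<longlonglongrightarrow> 0"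
proof (rule LIMSEQ_I)
  fix r :: real assume r: "r > 0"
  have hm: "h \<in> borel_measurable borel" using hc by (rule borel_measurable_continuous_onI)
  have Hb0: "Hb \<ge> 0" using hb[of 0] by linarith
  define R where "R = M' + 1"
  have R1: "R > 1" and MR: "M' < R" using M'pos unfolding R_def by auto
  define e where "e = r/4"
  have e: "e > 0" using r unfolding e_def by simp
  obtain g where gp: "real_polynomial_function g" and ga: "\<And>x. x \<in> {-R..R} \<Longrightarrow> \<bar>h x - g x\<bar> < e"
    using Stone_Weierstrass_real_polynomial_function[of "{-R..R}" h e] compact_Icc
      continuous_on_subset[OF hc] e by blast
  obtain a n where gdef: "g = (\<lambda>x. \<Sum>i\<le>n. a i * x^i)"
    using gp real_polynomial_function_iff_sum by blast
  define C where "C = Hb + (\<Sum>i\<le>n. \<bar>a i\<bar> * R^i)"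
  have C0: "C \<ge> 0" unfolding C_def using Hb0 R1 by (intro add_nonneg_nonneg sum_nonneg) auto
  have ev1: "eventually (\<lambda>j. C*((M'/R)^2)^j + C*((1/R)^2)^j < e) sequentially"
  proof -
    have "norm ((M'/R)^2) < 1" using M'pos MR
      by (simp add: power_less_one_iff abs_if) 
    moreover have "norm ((1/R)^2) < 1" using R1 by (simp add: power_less_one_iff)
    ultimately have "(\<lambda>j. C*((M'/R)^2)^j + C*((1/R)^2)^j) \<longlonglongrightarrow> C*0 + C*0"
      by (intro tendsto_intros LIMSEQ_power_zero)
    then show ?thesis using e by (intro order_tendstoD(2)) auto
  qed
  have ev2: "eventually (\<lambda>j. n \<le> 2*j) sequentially"
    using eventually_ge_at_top[of n] by eventually_elim auto
  obtain j where j1: "C*((M'/R)^2)^j + C*((1/R)^2)^j < e" and j2: "n \<le> 2*j"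
    using eventually_happens'[OF sequentially_bot eventually_conj[OF ev1 ev2]] by blast
  have Cj: "C * ((M'^(2*j) + 1) / R^(2*j)) < e"
  proof -
    have "C * ((M'^(2*j) + 1) / R^(2*j)) = C*((M'/R)^2)^j + C*((1/R)^2)^j"
      by (simp add: power_mult[symmetric] power_divide add_divide_distrib distrib_left mult.commute)
    then show ?thesis using j1 by simp
  qed
  have pw: "\<bar>h t - g t\<bar> \<le> e + C * (t^(2*j) / R^(2*j))" for t
  proof (cases "\<bar>t\<bar> \<le> R")
    case True
    then have "t \<in> {-R..R}" by auto
    then have "\<bar>h t - g t\<bar> < e" using ga by blast
    moreover have "0 \<le> C * (t^(2*j) / R^(2*j))"
      using C0 R1 by (intro mult_nonneg_nonneg divide_nonneg_pos) (auto simp: power_mult)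
    ultimately show ?thesis by linarith
  next
    case False
    define q where "q = (\<bar>t\<bar>/R)^(2*j)"
    have q1: "1 \<le> q" unfolding q_def using False R1 by (intro one_le_power) auto
    have qeq: "q = t^(2*j) / R^(2*j)" unfolding q_def
      by (simp add: power_divide power_mult power_even_abs)
    have ti: "\<bar>t\<bar>^i \<le> R^i * q" if "i \<le> n" for i
    proof -
      have "\<bar>t\<bar>^i = R^i * (\<bar>t\<bar>/R)^i" using R1 by (simp add: power_divide)
      also have "(\<bar>t\<bar>/R)^i \<le> q" unfolding q_def
        using False R1 that j2 by (intro power_increasing) auto
      then have "R^i * (\<bar>t\<bar>/R)^i \<le> R^i * q" using R1 by (intro mult_left_mono) auto
      finally show ?thesis .
    qed
    have "\<bar>h t - g t\<bar> \<le> \<bar>h t\<bar> + \<bar>g t\<bar>" by linarith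
    also have "\<bar>g t\<bar> \<le> (\<Sum>i\<le>n. \<bar>a i\<bar> * \<bar>t\<bar>^i)"
      unfolding gdef by (rule order_trans[OF sum_abs]) (simp add: abs_mult power_abs)
    also have "\<dots> \<le> (\<Sum>i\<le>n. \<bar>a i\<bar> * (R^i * q))"
      using ti by (intro sum_mono mult_left_mono) auto
    also have "\<dots> = (\<Sum>i\<le>n. \<bar>a i\<bar> * R^i) * q"
      by (simp add: sum_distrib_right mult.assoc)
    finally have "\<bar>h t - g t\<bar> \<le> Hb * q + (\<Sum>i\<le>n. \<bar>a i\<bar> * R^i) * q"
      using hb[of t] q1 Hb0 mult_left_mono[OF q1 Hb0] by linarith
    also have "\<dots> = C * q" unfolding C_def by (simp add: distrib_right)
    finally show ?thesis using qeq e by simp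
  qed
  have mom2: "(\<lambda>d. \<Sum>i\<le>n. a i * (moment i (\<nu> d) - moment i (\<nu>b d))) \<longlonglongrightarrow> (\<Sum>i\<le>n. a i * 0)"
    by (intro tendsto_intros mom)
  have evA: "eventually (\<lambda>d. \<bar>\<Sum>i\<le>n. a i * (moment i (\<nu> d) - moment i (\<nu>b d))\<bar> < e) sequentially"
    using mom2 e unfolding tendsto_iff by (force simp: dist_real_def)
  have evB: "eventually (\<lambda>d. moment (2*j) (\<nu> d) - moment (2*j) (\<nu>b d) < 1) sequentially"
    using mom[of "2*j"] by (intro order_tendstoD(2)) auto
  obtain N where N: "\<And>d. d \<ge> N \<Longrightarrow> \<bar>\<Sum>i\<le>n. a i * (moment i (\<nu> d) - moment i (\<nu>b d))\<bar> < e
      \<and> moment (2*j) (\<nu> d) - moment (2*j) (\<nu>b d) < 1"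
    using eventually_conj[OF evA evB] unfolding eventually_sequentially by blast
  show "\<exists>no. \<forall>d\<ge>no. norm ((\<integral>t. h t \<partial>\<nu> d) - (\<integral>t. h t \<partial>\<nu>b d) - 0) < r"
  proof (intro exI allI impI)
    fix d assume "d \<ge> N"
    note Nd = N[OF this]
    interpret P: prob_space "\<nu> d" using bp unfolding borel_prob_def by simp
    interpret Pb: prob_space "\<nu>b d" using bpb unfolding borel_prob_def by simp
    have gm: "g \<in> borel_measurable borel" unfolding gdef by measurable
    have ih: "integrable (\<nu> d) h" by (rule bp_int_bounded[OF bp hm hb])
    have ihb: "integrable (\<nu>b d) h" by (rule bp_int_bounded[OF bpb hm hb])
    have ig: "integrable (\<nu> d) g" unfolding gdef using int by auto
    have igb: "integrable (\<nu>b d) g" unfolding gdef using supp_int_pow[OF bpb supp] by auto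
    have intg: "(\<integral>t. g t \<partial>\<nu> d) = (\<Sum>i\<le>n. a i * moment i (\<nu> d))"
      unfolding gdef moment_def using int by (simp add: integral_sum)
    have intgb: "(\<integral>t. g t \<partial>\<nu>b d) = (\<Sum>i\<le>n. a i * moment i (\<nu>b d))"
      unfolding gdef moment_def using supp_int_pow[OF bpb supp] by (simp add: integral_sum)
    have I2: "\<bar>(\<integral>t. g t \<partial>\<nu> d) - (\<integral>t. g t \<partial>\<nu>b d)\<bar> < e"
      using Nd unfolding intg intgb by (simp add: sum_subtractf right_diff_distrib)
    have ipw: "integrable (\<nu> d) (\<lambda>t. e + C * (t^(2*j) / R^(2*j)))"
      using int by auto
    have I1: "\<bar>\<integral>t. h t - g t \<partial>\<nu> d\<bar> < 2*e"
    proof -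
      have "\<bar>\<integral>t. h t - g t \<partial>\<nu> d\<bar> \<le> (\<integral>t. e + C * (t^(2*j) / R^(2*j)) \<partial>\<nu> d)"
        by (rule integral_abs_bound_integral) (use ih ig ipw pw in auto)
      also have "\<dots> = e + C * (moment (2*j) (\<nu> d) / R^(2*j))"
        unfolding moment_def using int by (simp add: P.prob_space)
      also have "\<dots> \<le> e + C * ((M'^(2*j) + 1) / R^(2*j))"
      proof -
        have "moment (2*j) (\<nu> d) \<le> M'^(2*j) + 1"
          using Nd supp_mom_le[OF bpb supp, of j d] by linarith
        then show ?thesis using C0 R1
          by (intro add_left_mono mult_left_mono divide_right_mono) auto
      qed
      also have "\<dots> < 2*e" using Cj by simp
      finally show ?thesis .
    qed
    have I3: "\<bar>\<integral>t. g t - h t \<partial>\<nu>b d\<bar> \<le> e"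
    proof -
      have "AE t in \<nu>b d. \<bar>g t - h t\<bar> \<le> e"
        using supp[of d] unfolding supp_within_def
      proof (rule AE_mp, intro AE_I2 impI)
        fix t :: real assume "t \<in> {-M'..M'}"
        then have "t \<in> {-R..R}" using MR by auto
        then show "\<bar>g t - h t\<bar> \<le> e" using ga[of t] by simp
      qed
      then have "\<bar>\<integral>t. g t - h t \<partial>\<nu>b d\<bar> \<le> (\<integral>t. e \<partial>\<nu>b d)"
        by (intro integral_abs_bound_integral[THEN order_trans] integral_mono_AE) (use igb ihb in auto)
      then show ?thesis by (simp add: Pb.prob_space)
    qed
    have "(\<integral>t. h t \<partial>\<nu> d) - (\<integral>t. h t \<partial>\<nu>b d)
        = (\<integral>t. h t - g t \<partial>\<nu> d) + ((\<integral>t. g t \<partial>\<nu> d) - (\<integral>t. g t \<partial>\<nu>b d)) + (\<integral>t. g t - h t \<partial>\<nu>b d)"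
      using ih ig igb ihb by simp
    then have "\<bar>(\<integral>t. h t \<partial>\<nu> d) - (\<integral>t. h t \<partial>\<nu>b d)\<bar> < 4*e"
      using I1 I2 I3 by linarith
    then show "norm ((\<integral>t. h t \<partial>\<nu> d) - (\<integral>t. h t \<partial>\<nu>b d) - 0) < r"
      unfolding e_def by simp
  qed
qed



lemma Poisson_cont: "\<gamma> > 0 \<Longrightarrow> continuous_on UNIV (\<lambda>t. Poisson \<gamma> (x - t))"
  unfolding Poisson_def using sqpos
  by (intro continuous_intros) (auto simp: pi_gt_zero)

lemma pc_nonneg: "borel_prob \<nu> \<Longrightarrow> \<gamma> > 0 \<Longrightarrow> 0 \<le> Poisson_conv \<gamma> \<nu> x"
  unfolding Poisson_conv_def using Poisson_pos by (intro integral_nonneg_AE) (auto intro: less_imp_le)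

lemma pc_upper: assumes "borel_prob \<nu>" "\<gamma> > 0" shows "Poisson_conv \<gamma> \<nu> x \<le> 1/(pi*\<gamma>)"
proof -
  interpret prob_space \<nu> using assms unfolding borel_prob_def by simp
  have "Poisson_conv \<gamma> \<nu> x \<le> (\<integral>t. 1/(pi*\<gamma>) \<partial>\<nu>)"
    unfolding Poisson_conv_def
    by (intro integral_mono Poisson_integrable[OF assms] Poisson_le[OF assms(2)]) auto
  then show ?thesis by (simp add: prob_space)
qed

lemma pc_lower: assumes "borel_prob \<nu>" "\<gamma> > 0" "supp_within \<nu> M"
  shows "\<gamma> / (pi*((\<bar>x\<bar>+M)\<^sup>2+\<gamma>\<^sup>2)) \<le> Poisson_conv \<gamma> \<nu> x"
proof -
  interpret prob_space \<nu> using assms unfolding borel_prob_def by simp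
  have "AE t in \<nu>. \<gamma> / (pi*((\<bar>x\<bar>+M)\<^sup>2+\<gamma>\<^sup>2)) \<le> Poisson \<gamma> (x - t)"
    using assms(3) unfolding supp_within_def
    by (rule AE_mp) (auto intro!: AE_I2 Poisson_lower[OF assms(2)])
  then have "(\<integral>t. \<gamma> / (pi*((\<bar>x\<bar>+M)\<^sup>2+\<gamma>\<^sup>2)) \<partial>\<nu>) \<le> Poisson_conv \<gamma> \<nu> x"
    unfolding Poisson_conv_def
    by (intro integral_mono_AE Poisson_integrable[OF assms(1,2)]) auto
  then show ?thesis by (simp add: prob_space)
qed

lemma pc_tail:
  assumes "borel_prob \<nu>" "\<gamma> > 0" "integrable \<nu> (\<lambda>t. t^2)"
  shows "(1+x\<^sup>2) * Poisson_conv \<gamma> \<nu> x \<le> (2/(pi*\<gamma>) + 2*\<gamma>/pi) * (1 + moment 2 \<nu>)"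
proof -
  interpret prob_space \<nu> using assms unfolding borel_prob_def by simp
  have "(1+x\<^sup>2) * Poisson_conv \<gamma> \<nu> x = (\<integral>t. (1+x\<^sup>2) * Poisson \<gamma> (x - t) \<partial>\<nu>)"
    unfolding Poisson_conv_def by simp
  also have "\<dots> \<le> (\<integral>t. (2/(pi*\<gamma>) + 2*\<gamma>/pi) * (1+t\<^sup>2) \<partial>\<nu>)"
    by (intro integral_mono Poisson_tail[OF assms(2)])
       (use Poisson_integrable[OF assms(1,2)] assms(3) in auto)
  also have "\<dots> = (2/(pi*\<gamma>) + 2*\<gamma>/pi) * (1 + moment 2 \<nu>)"
    unfolding moment_def using assms(3) by (simp add: prob_space)
  finally show ?thesis .
qed

definition Aell :: "real \<Rightarrow> real \<Rightarrow> real" where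
  "Aell \<gamma> M = \<bar>ln (pi*\<gamma>)\<bar> + \<bar>ln (pi/\<gamma>)\<bar> + \<bar>ln ((M+1)\<^sup>2+\<gamma>\<^sup>2)\<bar>"

lemma ell_eq: "borel_prob \<mu> \<Longrightarrow> \<gamma> > 0 \<Longrightarrow> ell \<gamma> x \<mu> = - ln (Poisson_conv \<gamma> \<mu> x)"
  unfolding ell_def using Stieltjes_Poisson by simp

lemma ell_bound:
  assumes "\<mu> \<in> B M" "\<gamma> > 0" "M > 0"
  shows "\<bar>ell \<gamma> x \<mu>\<bar> \<le> Aell \<gamma> M + 2 * ln (1 + \<bar>x\<bar>)"
proof -
  have bp: "borel_prob \<mu>" and sw: "supp_within \<mu> M" using assms(1) unfolding B_def by auto
  define pc where "pc = Poisson_conv \<gamma> \<mu> x"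
  define D where "D = (\<bar>x\<bar>+M)\<^sup>2+\<gamma>\<^sup>2"
  define K0 where "K0 = (M+1)\<^sup>2+\<gamma>\<^sup>2"
  have Dp: "D > 0" unfolding D_def using sqpos[OF assms(2)] by simp
  have K0p: "K0 > 0" unfolding K0_def using sqpos[OF assms(2)] by simp
  have Lp: "0 < \<gamma> / (pi*D)" using Dp assms(2) by simp
  have pcL: "\<gamma> / (pi*D) \<le> pc" unfolding pc_def D_def by (rule pc_lower[OF bp assms(2) sw])
  have pcU: "pc \<le> 1/(pi*\<gamma>)" unfolding pc_def by (rule pc_upper[OF bp assms(2)])
  have pcp: "pc > 0" using Lp pcL by linarith
  have e: "ell \<gamma> x \<mu> = - ln pc" unfolding pc_def by (rule ell_eq[OF bp assms(2)])
  have "ln (\<gamma> / (pi*D)) \<le> ln pc" using Lp pcL pcp by simp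
  moreover have "ln (\<gamma> / (pi*D)) = ln \<gamma> - ln pi - ln D"
    using Dp assms(2) by (simp add: ln_div ln_mult)
  moreover have "ln (pi/\<gamma>) = ln pi - ln \<gamma>" using assms(2) by (simp add: ln_div)
  moreover have "ln D \<le> ln K0 + 2 * ln (1 + \<bar>x\<bar>)"
  proof -
    have "\<bar>x\<bar>+M \<le> (M+1)*(1+\<bar>x\<bar>)" using assms(3) by (simp add: algebra_simps)
    then have "(\<bar>x\<bar>+M)\<^sup>2 \<le> ((M+1)*(1+\<bar>x\<bar>))\<^sup>2" using assms(3) by (intro power_mono) auto
    moreover have "\<gamma>\<^sup>2 \<le> \<gamma>\<^sup>2 * (1+\<bar>x\<bar>)\<^sup>2"
      using mult_left_mono[of 1 "(1+\<bar>x\<bar>)\<^sup>2" "\<gamma>\<^sup>2"] by (simp add: one_le_power)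
    moreover have "((M+1)*(1+\<bar>x\<bar>))\<^sup>2 = (M+1)\<^sup>2*(1+\<bar>x\<bar>)\<^sup>2"
      by (rule power_mult_distrib)
    ultimately have "D \<le> K0 * (1+\<bar>x\<bar>)\<^sup>2" unfolding D_def K0_def
      by (simp only: distrib_right)
    then have "ln D \<le> ln (K0 * (1+\<bar>x\<bar>)\<^sup>2)" using Dp by simp
    also have "\<dots> = ln K0 + 2 * ln (1+\<bar>x\<bar>)" using K0p
      by (simp add: ln_mult ln_realpow)
    finally show ?thesis .
  qed
  ultimately have up: "ell \<gamma> x \<mu> \<le> \<bar>ln (pi/\<gamma>)\<bar> + \<bar>ln K0\<bar> + 2 * ln (1 + \<bar>x\<bar>)"
    unfolding e by linarith
  have "ln pc \<le> ln (1/(pi*\<gamma>))" using pcU pcp by (rule ln_mono)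
  moreover have "ln (1/(pi*\<gamma>)) = - ln (pi*\<gamma>)" using assms(2) by (simp add: ln_div)
  ultimately have lo: "- \<bar>ln (pi*\<gamma>)\<bar> \<le> ell \<gamma> x \<mu>" unfolding e by linarith
  have "0 \<le> ln (1 + \<bar>x\<bar>)" by simp
  then show ?thesis using up lo unfolding Aell_def K0_def by linarith
qed

lemma ell_meas:
  assumes "borel_prob \<mu>" "\<gamma> > 0"
  shows "(\<lambda>x. ell \<gamma> x \<mu>) \<in> borel_measurable lborel"
proof -
  have "(\<lambda>x. - ln (Poisson_conv \<gamma> \<mu> x)) \<in> borel_measurable lborel"
    using Poisson_conv_measurable[OF assms(1)] by measurable
  then show ?thesis using ell_eq[OF assms] by simp
qed



lemma return_in_B: "M > 0 \<Longrightarrow> return borel (0::real) \<in> B M"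
  unfolding B_def borel_prob_def supp_within_def
  by (auto intro!: prob_space_return simp: AE_return)

theorem mainTheorem7:
  fixes \<nu> \<nu>b :: "nat \<Rightarrow> real measure" and M' :: real
  assumes "\<And>d. borel_prob (\<nu> d)" and "\<And>d. borel_prob (\<nu>b d)"
    and "\<And>d k. integrable (\<nu> d) (\<lambda>x. x ^ k)"
    and "\<And>d. compactly_supported (\<nu>b d)"
    and "\<And>k. (\<lambda>d. \<bar>moment k (\<nu> d) - moment k (\<nu>b d)\<bar>) \<longlonglongrightarrow> 0"
    and "M' > 0" and "\<And>d. supp_within (\<nu>b d) M'"
  shows "\<forall>\<gamma>>0. \<forall>M>0.
    (\<lambda>d. SUP \<mu>\<in>B M. ereal \<bar>H \<gamma> (\<nu> d) \<mu> - H \<gamma> (\<nu>b d) \<mu>\<bar>) \<longlonglongrightarrow> 0"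
proof (intro allI impI)
  fix \<gamma> M :: real assume gp: "\<gamma> > 0" and Mp: "M > 0"
  note bp = assms(1) and bpb = assms(2) and supp = assms(7)
  have mom: "\<And>k. (\<lambda>d. moment k (\<nu> d) - moment k (\<nu>b d)) \<longlonglongrightarrow> 0"
    using assms(5) tendsto_rabs_zero_iff by blast
  define Kp where "Kp = 2/(pi*\<gamma>) + 2*\<gamma>/pi"
  have Kp0: "Kp \<ge> 0" using gp unfolding Kp_def by simp
  define c where "c = Aell \<gamma> M"
  have c0: "c \<ge> 0" unfolding c_def Aell_def by simp
  define Lam where "Lam x = c + 2 * ln (1 + \<bar>x\<bar>)" for x :: real
  have Lam0: "Lam x \<ge> 0" for x unfolding Lam_def using c0 by simp
  obtain Bm where Bm: "\<And>d. \<bar>moment 2 (\<nu> d) - moment 2 (\<nu>b d)\<bar> \<le> Bm"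
  proof -
    have "Bseq (\<lambda>d. moment 2 (\<nu> d) - moment 2 (\<nu>b d))"
      by (rule convergent_imp_Bseq) (use mom[of 2] in \<open>auto simp: convergent_def\<close>)
    then obtain K where "\<forall>d. norm (moment 2 (\<nu> d) - moment 2 (\<nu>b d)) \<le> K"
      by (auto elim: BseqE)
    then show ?thesis using that by auto
  qed
  have Bm0: "Bm \<ge> 0" using Bm[of 0] by linarith
  have m2b: "moment 2 (\<nu>b d) \<le> M'^2" for d
    using supp_mom_le[OF bpb supp, of 1 d] by simp
  define Q where "Q = Kp * (2 + 2*M'^2 + Bm)"
  have Q0: "Q \<ge> 0" unfolding Q_def using Kp0 Bm0 by simp
  have pcQ: "Poisson_conv \<gamma> (\<nu> d) x \<le> Q / (1+x\<^sup>2)" "Poisson_conv \<gamma> (\<nu>b d) x \<le> Q / (1+x\<^sup>2)" for d x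
  proof -
    have p: "1 + x\<^sup>2 > 0" by (simp add: add_pos_nonneg)
    have "(1+x\<^sup>2) * Poisson_conv \<gamma> (\<nu> d) x \<le> Kp * (1 + moment 2 (\<nu> d))"
      unfolding Kp_def by (rule pc_tail[OF bp gp assms(3)])
    also have "\<dots> \<le> Q"
    proof -
      have "moment 2 (\<nu> d) - moment 2 (\<nu>b d) \<le> Bm" using Bm[of d] by (simp add: abs_le_iff)
      moreover have "0 \<le> M'^2" by simp
      ultimately have "1 + moment 2 (\<nu> d) \<le> 2 + 2*M'^2 + Bm" using m2b[of d] by linarith
      then show ?thesis unfolding Q_def using Kp0 by (intro mult_left_mono) auto
    qed
    finally show "Poisson_conv \<gamma> (\<nu> d) x \<le> Q / (1+x\<^sup>2)" using p by (simp add: field_simps)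
    have "(1+x\<^sup>2) * Poisson_conv \<gamma> (\<nu>b d) x \<le> Kp * (1 + moment 2 (\<nu>b d))"
      unfolding Kp_def by (rule pc_tail[OF bpb gp supp_int_pow[OF bpb supp]])
    also have "\<dots> \<le> Q"
    proof -
      have "0 \<le> M'^2" by simp
      then have "1 + moment 2 (\<nu>b d) \<le> 2 + 2*M'^2 + Bm" using m2b[of d] Bm0 by linarith
      then show ?thesis unfolding Q_def using Kp0 by (intro mult_left_mono) auto
    qed
    finally show "Poisson_conv \<gamma> (\<nu>b d) x \<le> Q / (1+x\<^sup>2)" using p by (simp add: field_simps)
  qed
  have pcb: "\<bar>Poisson_conv \<gamma> (\<nu> d) x - Poisson_conv \<gamma> (\<nu>b d) x\<bar> \<le> Q / (1+x\<^sup>2)" for d x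
    using pcQ[of d x] pc_nonneg[OF bp gp, of d x] pc_nonneg[OF bpb gp, of d x] by linarith
  define w where "w x = 2 * Q * ee c \<bar>x\<bar>" for x
  have w_int: "integrable lborel w" unfolding w_def using ee_integrable[OF c0] by simp
  have dom: "Lam x * (Q / (1+x\<^sup>2)) \<le> w x" for x
  proof -
    have p: "1 + x\<^sup>2 > 0" by (simp add: add_pos_nonneg)
    have p2: "(1+\<bar>x\<bar>)\<^sup>2 > 0" by (simp add: add_pos_nonneg)
    have "(1+\<bar>x\<bar>)\<^sup>2 \<le> 2 * (1 + x\<^sup>2)"
    proof -
      have "0 \<le> (\<bar>x\<bar> - 1)\<^sup>2" by simp
      then show ?thesis by (simp add: power2_eq_square algebra_simps)
    qed
    then have "2 / (2 * (1+x\<^sup>2)) \<le> 2 / (1+\<bar>x\<bar>)\<^sup>2" using p p2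
      by (intro divide_left_mono mult_pos_pos) (auto simp: add_pos_nonneg)
    moreover have "(2*1) / (2 * (1+x\<^sup>2)) = 1/(1+x\<^sup>2)"
      by (rule mult_divide_mult_cancel_left) simp
    ultimately have "1 / (1+x\<^sup>2) \<le> 2 / (1+\<bar>x\<bar>)\<^sup>2" by simp
    then have "Lam x * Q * (1 / (1+x\<^sup>2)) \<le> Lam x * Q * (2 / (1+\<bar>x\<bar>)\<^sup>2)"
      using Lam0[of x] Q0 by (intro mult_left_mono) auto
    then show ?thesis unfolding w_def ee_def Lam_def by (simp add: field_simps)
  qed
  define s where "s d x = Lam x * \<bar>Poisson_conv \<gamma> (\<nu> d) x - Poisson_conv \<gamma> (\<nu>b d) x\<bar>" for d x
  have s_meas: "s d \<in> borel_measurable lborel" for d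
    unfolding s_def Lam_def
    using Poisson_conv_measurable[OF bp, of \<gamma> d] Poisson_conv_measurable[OF bpb, of \<gamma> d]
    by measurable
  have s_bound: "norm (s d x) \<le> w x" for d x
  proof -
    have "s d x \<le> Lam x * (Q / (1+x\<^sup>2))" unfolding s_def
      using pcb[of d x] Lam0[of x] by (intro mult_left_mono) auto
    moreover have "0 \<le> s d x" unfolding s_def using Lam0[of x] by simp
    ultimately show ?thesis using dom[of x] by simp
  qed
  have s_lim: "(\<lambda>d. s d x) \<longlonglongrightarrow> 0" for x
  proof -
    have "(\<lambda>d. Poisson_conv \<gamma> (\<nu> d) x - Poisson_conv \<gamma> (\<nu>b d) x) \<longlonglongrightarrow> 0"
      unfolding Poisson_conv_def
      by (rule moment_weak[OF bp bpb assms(3) mom assms(6) supp Poisson_cont[OF gp]])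
         (use Poisson_le[OF gp] Poisson_pos[OF gp] in \<open>auto simp: abs_of_pos less_imp_le\<close>)
    then have "(\<lambda>d. Lam x * \<bar>Poisson_conv \<gamma> (\<nu> d) x - Poisson_conv \<gamma> (\<nu>b d) x\<bar>) \<longlonglongrightarrow> Lam x * \<bar>0\<bar>"
      by (intro tendsto_intros)
    then show ?thesis unfolding s_def by simp
  qed
  have s_int: "\<And>d. integrable lborel (s d)"
    and s_conv: "(\<lambda>d. integral\<^sup>L lborel (s d)) \<longlonglongrightarrow> integral\<^sup>L lborel (\<lambda>x. 0::real)"
    using integrable_dominated_convergence2[of "\<lambda>x. 0::real" lborel s w]
      integral_dominated_convergence[of "\<lambda>x. 0::real" lborel s w]
      s_meas w_int s_lim s_bound by auto
  have key: "\<bar>H \<gamma> (\<nu> d) \<mu> - H \<gamma> (\<nu>b d) \<mu>\<bar> \<le> integral\<^sup>L lborel (s d)" if mu: "\<mu> \<in> B M" for d \<mu>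
  proof -
    have bpm: "borel_prob \<mu>" using mu unfolding B_def by auto
    have ellm: "(\<lambda>x. ell \<gamma> x \<mu>) \<in> borel_measurable lborel" by (rule ell_meas[OF bpm gp])
    have ellb: "\<bar>ell \<gamma> x \<mu>\<bar> \<le> Lam x" for x
      unfolding Lam_def c_def by (rule ell_bound[OF mu gp Mp])
    have i1: "integrable lborel (\<lambda>x. ell \<gamma> x \<mu> * Poisson_conv \<gamma> (\<nu> d) x)"
    proof (rule Bochner_Integration.integrable_bound[OF w_int])
      show "(\<lambda>x. ell \<gamma> x \<mu> * Poisson_conv \<gamma> (\<nu> d) x) \<in> borel_measurable lborel"
        using ellm Poisson_conv_measurable[OF bp, of \<gamma> d] by measurable
      show "AE x in lborel. norm (ell \<gamma> x \<mu> * Poisson_conv \<gamma> (\<nu> d) x) \<le> norm (w x)"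
      proof (intro AE_I2)
        fix x
        have "\<bar>ell \<gamma> x \<mu> * Poisson_conv \<gamma> (\<nu> d) x\<bar> \<le> Lam x * (Q / (1+x\<^sup>2))"
          unfolding abs_mult using ellb[of x] pcQ(1)[of d x] pc_nonneg[OF bp gp, of d x]
          by (intro mult_mono) auto
        then show "norm (ell \<gamma> x \<mu> * Poisson_conv \<gamma> (\<nu> d) x) \<le> norm (w x)" using dom[of x] by simp
      qed
    qed
    have i2: "integrable lborel (\<lambda>x. ell \<gamma> x \<mu> * Poisson_conv \<gamma> (\<nu>b d) x)"
    proof (rule Bochner_Integration.integrable_bound[OF w_int])
      show "(\<lambda>x. ell \<gamma> x \<mu> * Poisson_conv \<gamma> (\<nu>b d) x) \<in> borel_measurable lborel"
        using ellm Poisson_conv_measurable[OF bpb, of \<gamma> d] by measurable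
      show "AE x in lborel. norm (ell \<gamma> x \<mu> * Poisson_conv \<gamma> (\<nu>b d) x) \<le> norm (w x)"
      proof (intro AE_I2)
        fix x
        have "\<bar>ell \<gamma> x \<mu> * Poisson_conv \<gamma> (\<nu>b d) x\<bar> \<le> Lam x * (Q / (1+x\<^sup>2))"
          unfolding abs_mult using ellb[of x] pcQ(2)[of d x] pc_nonneg[OF bpb gp, of d x]
          by (intro mult_mono) auto
        then show "norm (ell \<gamma> x \<mu> * Poisson_conv \<gamma> (\<nu>b d) x) \<le> norm (w x)" using dom[of x] by simp
      qed
    qed
    have "H \<gamma> (\<nu> d) \<mu> - H \<gamma> (\<nu>b d) \<mu>
        = (\<integral>x. ell \<gamma> x \<mu> * Poisson_conv \<gamma> (\<nu> d) x - ell \<gamma> x \<mu> * Poisson_conv \<gamma> (\<nu>b d) x \<partial>lborel)"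
      unfolding H_def using i1 i2 by simp
    also have "\<bar>\<dots>\<bar> \<le> integral\<^sup>L lborel (s d)"
    proof (rule integral_abs_bound_integral)
      show "integrable lborel (\<lambda>x. ell \<gamma> x \<mu> * Poisson_conv \<gamma> (\<nu> d) x - ell \<gamma> x \<mu> * Poisson_conv \<gamma> (\<nu>b d) x)"
        using i1 i2 by simp
      show "integrable lborel (s d)" by (rule s_int)
      fix x
      have "\<bar>ell \<gamma> x \<mu> * Poisson_conv \<gamma> (\<nu> d) x - ell \<gamma> x \<mu> * Poisson_conv \<gamma> (\<nu>b d) x\<bar>
          = \<bar>ell \<gamma> x \<mu>\<bar> * \<bar>Poisson_conv \<gamma> (\<nu> d) x - Poisson_conv \<gamma> (\<nu>b d) x\<bar>"
        by (simp add: abs_mult[symmetric] right_diff_distrib)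
      also have "\<dots> \<le> s d x" unfolding s_def using ellb[of x] by (intro mult_right_mono) auto
      finally show "\<bar>ell \<gamma> x \<mu> * Poisson_conv \<gamma> (\<nu> d) x - ell \<gamma> x \<mu> * Poisson_conv \<gamma> (\<nu>b d) x\<bar> \<le> s d x" .
    qed
    finally show ?thesis .
  qed
  define S where "S d = (SUP \<mu>\<in>B M. ereal \<bar>H \<gamma> (\<nu> d) \<mu> - H \<gamma> (\<nu>b d) \<mu>\<bar>)" for d
  have S_lo: "0 \<le> S d" for d
    unfolding S_def by (rule SUP_upper2[OF return_in_B[OF Mp]]) simp
  have S_hi: "S d \<le> ereal (integral\<^sup>L lborel (s d))" for d
    unfolding S_def by (rule SUP_least) (use key in simp)
  have up: "(\<lambda>d. ereal (integral\<^sup>L lborel (s d))) \<longlonglongrightarrow> 0"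
    using s_conv by (simp add: zero_ereal_def tendsto_ereal)
  have "S \<longlonglongrightarrow> 0"
    by (rule tendsto_sandwich[OF _ _ tendsto_const up]) (use S_lo S_hi in auto)
  then show "(\<lambda>d. SUP \<mu>\<in>B M. ereal \<bar>H \<gamma> (\<nu> d) \<mu> - H \<gamma> (\<nu>b d) \<mu>\<bar>) \<longlonglongrightarrow> 0"
    unfolding S_def by simp
qed

end
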